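(* Let $w\in S_n$ and $1\le p<q\le n$, and let $\mathcal{S}_{w,pq}=K_{pq}.F_w\subset Fl_n(\mathbb{H})$, where $F_w=(\mathbb{H}e_{w(1)},\ldots,\mathbb{H}e_{w(n)})$. The group $G=(\mathbb{H}^* )^n=\{\mathrm{Diag}(\gamma_1,\ldots,\gamma_n):\gamma_\nu\in\mathbb{H}\setminus\{0\}\}$ acts transitively on the complement in $\mathcal{S}_{w,pq}$ of its two $K$-fixed points $F_w$ and $F_{s_{pq}w}$, and there is a point of this complement whose stabilizer in $G$ is $G_{pq}=\{(\gamma_1,\ldots,\gamma_n)\in G:\gamma_p=\gamma_q\}$.
   Context: $\mathbb{H}^n$ is a left $\mathbb{H}$-module with standard basis $e_1,\ldots,e_n$ and inner product $(h,k)=\sum_\nu h_\nu\bar k_\nu$; an invertible matrix $B$ acts $\mathbb{H}$-linearly by $h\mapsto h\cdot B^*$, hence acts on $Fl_n(\mathbb{H})$, the manifold of complete flags $V_1\subset\cdots\subset V_n$ of left $\mathbb{H}$-submodules with $\dim V_\nu=\nu$ (a flag given by mutually orthogonal lines $(L_1,\ldots,L_n)$ corresponds to $V_\nu=L_1\oplus\cdots\oplus L_\nu$). $K=Sp(1)^n$ is the diagonal subgroup of $Sp(n)=\{B:BB^*=I\}$; $K_{pq}\subset Sp(n)$ is the subgroup of matrices whose entries vanish except on the diagonal and at positions $(p,q)$, $(q,p)$. $s_{pq}$ is the transposition of $p,q$. *)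

theory Defs
  imports Complex_Main "HOL-Combinatorics.Permutations" "HOL-Combinatorics.Transposition"
begin

datatype quat = Quat (qre: real) (qi: real) (qj: real) (qk: real)

instantiation quat :: ring_1
begin
definition "0 = Quat 0 0 0 0"
definition "1 = Quat 1 0 0 0"
definition "x + y = Quat (qre x + qre y) (qi x + qi y) (qj x + qj y) (qk x + qk y)"
definition "x - y = Quat (qre x - qre y) (qi x - qi y) (qj x - qj y) (qk x - qk y)"
definition "- x = Quat (- qre x) (- qi x) (- qj x) (- qk x)"
definition "x * y = Quat
   (qre x * qre y - qi x * qi y - qj x * qj y - qk x * qk y)
   (qre x * qi y + qi x * qre y + qj x * qk y - qk x * qj y)
   (qre x * qj y - qi x * qk y + qj x * qre y + qk x * qi y)
   (qre x * qk y + qi x * qj y - qj x * qi y + qk x * qre y)"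
instance
  by standard (simp_all add: zero_quat_def one_quat_def plus_quat_def minus_quat_def
      uminus_quat_def times_quat_def algebra_simps)
end

definition qcnj :: "quat \<Rightarrow> quat" where
  "qcnj x = Quat (qre x) (- qi x) (- qj x) (- qk x)"

section \<open>The left H-module H^n (vectors indexed by 1..n, zero elsewhere)\<close>

type_synonym qvec = "nat \<Rightarrow> quat"
type_synonym qmat = "nat \<Rightarrow> nat \<Rightarrow> quat"

definition Hvec :: "nat \<Rightarrow> qvec set" where
  "Hvec n = {x. \<forall>i. i \<notin> {1..n} \<longrightarrow> x i = 0}"

definition evec :: "nat \<Rightarrow> qvec" where
  "evec j = (\<lambda>i. if i = j then 1 else 0)"

definition lscale :: "quat \<Rightarrow> qvec \<Rightarrow> qvec" where
  "lscale c h = (\<lambda>i. c * h i)"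

definition lcomb :: "(nat \<Rightarrow> quat) \<Rightarrow> qvec list \<Rightarrow> qvec" where
  "lcomb c vs = (\<lambda>i. \<Sum>k<length vs. c k * (vs ! k) i)"

definition hspan :: "qvec list \<Rightarrow> qvec set" where
  "hspan vs = {lcomb c vs | c. True}"

definition hindep :: "qvec list \<Rightarrow> bool" where
  "hindep vs \<longleftrightarrow> (\<forall>c. lcomb c vs = (\<lambda>i. 0) \<longrightarrow> (\<forall>k<length vs. c k = 0))"

definition hsubmod_dim :: "nat \<Rightarrow> qvec set \<Rightarrow> nat \<Rightarrow> bool" where
  "hsubmod_dim n V d \<longleftrightarrow> V \<subseteq> Hvec n \<and>
     (\<exists>vs. length vs = d \<and> set vs \<subseteq> V \<and> hindep vs \<and> hspan vs = V)"

text \<open>A flag is encoded as the family nu |-> V_nu for nu in 1..n (empty set elsewhere).\<close>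
type_synonym qflag = "nat \<Rightarrow> qvec set"

definition Fl :: "nat \<Rightarrow> qflag set" where
  "Fl n = {V. (\<forall>\<nu>\<in>{1..n}. hsubmod_dim n (V \<nu>) \<nu>)
            \<and> (\<forall>\<nu>\<in>{1..<n}. V \<nu> \<subseteq> V (Suc \<nu>))
            \<and> (\<forall>\<nu>. \<nu> \<notin> {1..n} \<longrightarrow> V \<nu> = {})}"

definition flag_of_lines :: "nat \<Rightarrow> (nat \<Rightarrow> qvec set) \<Rightarrow> qflag" where
  "flag_of_lines n L = (\<lambda>\<nu>. if \<nu> \<in> {1..n}
       then {(\<lambda>i. \<Sum>k\<in>{1..\<nu>}. x k i) | x. \<forall>k\<in>{1..\<nu>}. x k \<in> L k} else {})"

definition Hline :: "nat \<Rightarrow> qvec set" where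
  "Hline j = {lscale c (evec j) | c. True}"

definition Fw :: "nat \<Rightarrow> (nat \<Rightarrow> nat) \<Rightarrow> qflag" where
  "Fw n w = flag_of_lines n (\<lambda>\<nu>. Hline (w \<nu>))"

definition is_qmat :: "nat \<Rightarrow> qmat \<Rightarrow> bool" where
  "is_qmat n B \<longleftrightarrow> (\<forall>i j. i \<notin> {1..n} \<or> j \<notin> {1..n} \<longrightarrow> B i j = 0)"

definition adj :: "qmat \<Rightarrow> qmat" where
  "adj B = (\<lambda>i j. qcnj (B j i))"

definition mmul :: "nat \<Rightarrow> qmat \<Rightarrow> qmat \<Rightarrow> qmat" where
  "mmul n A B = (\<lambda>i j. \<Sum>k\<in>{1..n}. A i k * B k j)"

definition idm :: "nat \<Rightarrow> qmat" where
  "idm n = (\<lambda>i j. if i = j \<and> i \<in> {1..n} then 1 else 0)"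

definition vmul :: "nat \<Rightarrow> qvec \<Rightarrow> qmat \<Rightarrow> qvec" where
  "vmul n h A = (\<lambda>j. if j \<in> {1..n} then \<Sum>i\<in>{1..n}. h i * A i j else 0)"

definition flag_act :: "nat \<Rightarrow> qmat \<Rightarrow> qflag \<Rightarrow> qflag" where
  "flag_act n B V = (\<lambda>\<nu>. (\<lambda>h. vmul n h (adj B)) ` V \<nu>)"

definition Sp :: "nat \<Rightarrow> qmat set" where
  "Sp n = {B. is_qmat n B \<and> mmul n B (adj B) = idm n}"

definition Diag :: "nat \<Rightarrow> (nat \<Rightarrow> quat) \<Rightarrow> qmat" where
  "Diag n \<gamma> = (\<lambda>i j. if i = j \<and> i \<in> {1..n} then \<gamma> i else 0)"

definition Kgrp :: "nat \<Rightarrow> qmat set" where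
  "Kgrp n = {B \<in> Sp n. \<forall>i j. i \<noteq> j \<longrightarrow> B i j = 0}"

definition Kpq :: "nat \<Rightarrow> nat \<Rightarrow> nat \<Rightarrow> qmat set" where
  "Kpq n p q = {B \<in> Sp n. \<forall>i j. i \<noteq> j \<and> (i, j) \<noteq> (p, q) \<and> (i, j) \<noteq> (q, p) \<longrightarrow> B i j = 0}"

definition Ggrp :: "nat \<Rightarrow> qmat set" where
  "Ggrp n = {Diag n \<gamma> | \<gamma>. \<forall>\<nu>\<in>{1..n}. \<gamma> \<nu> \<noteq> 0}"

definition Gpq :: "nat \<Rightarrow> nat \<Rightarrow> nat \<Rightarrow> qmat set" where
  "Gpq n p q = {Diag n \<gamma> | \<gamma>. (\<forall>\<nu>\<in>{1..n}. \<gamma> \<nu> \<noteq> 0) \<and> \<gamma> p = \<gamma> q}"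

definition Swpq :: "nat \<Rightarrow> (nat \<Rightarrow> nat) \<Rightarrow> nat \<Rightarrow> nat \<Rightarrow> qflag set" where
  "Swpq n w p q = (\<lambda>B. flag_act n B (Fw n w)) ` Kpq n p q"

end

theory Submission
  imports Defs
begin

definition qr :: "real \<Rightarrow> quat" where "qr r = Quat r 0 0 0"
definition qn :: "quat \<Rightarrow> real" where "qn x = qre x ^ 2 + qi x ^ 2 + qj x ^ 2 + qk x ^ 2"
definition qinv :: "quat \<Rightarrow> quat" where
  "qinv x = qr (1 / qn x) * qcnj x"

lemmas qdefs = zero_quat_def one_quat_def plus_quat_def minus_quat_def
      uminus_quat_def times_quat_def qcnj_def qr_def

lemma qn_pos: "x \<noteq> 0 \<Longrightarrow> qn x > 0"
proof -
  assume "x \<noteq> 0"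
  then have "qre x \<noteq> 0 \<or> qi x \<noteq> 0 \<or> qj x \<noteq> 0 \<or> qk x \<noteq> 0"
    by (cases x) (auto simp: zero_quat_def)
  moreover have "0 \<le> qre x ^ 2" "0 \<le> qi x ^ 2" "0 \<le> qj x ^ 2" "0 \<le> qk x ^ 2" by simp_all
  ultimately show ?thesis unfolding qn_def
    by (smt (verit) zero_less_power2)
qed

lemma qcnj_mult: "qcnj (x * y) = qcnj y * qcnj x"
  by (simp add: qdefs algebra_simps)
lemma qcnj_add: "qcnj (x + y) = qcnj x + qcnj y"
  by (simp add: qdefs)
lemma qcnj_minus: "qcnj (- x) = - qcnj x"
  by (simp add: qdefs)
lemma qcnj_cnj[simp]: "qcnj (qcnj x) = x"
  by (cases x) (simp add: qdefs)
lemma qcnj_0[simp]: "qcnj 0 = 0" by (simp add: qdefs)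
lemma qcnj_1[simp]: "qcnj 1 = 1" by (simp add: qdefs)
lemma qcnj_eq0[simp]: "qcnj x = 0 \<longleftrightarrow> x = 0"
  by (cases x) (auto simp: qdefs)
lemma qr_comm: "qr r * x = x * qr r"
  by (simp add: qdefs)
lemma qcnj_qr[simp]: "qcnj (qr r) = qr r" by (simp add: qdefs)
lemma qr_mult: "qr r * qr s = qr (r * s)" by (simp add: qdefs)
lemma qr_1: "qr 1 = 1" by (simp add: qdefs)
lemma qr_eq0[simp]: "qr r = 0 \<longleftrightarrow> r = 0" by (simp add: qdefs)
lemma q_mult_cnj: "x * qcnj x = qr (qn x)"
  by (simp add: qdefs qn_def power2_eq_square algebra_simps)
lemma q_cnj_mult: "qcnj x * x = qr (qn x)"
  by (simp add: qdefs qn_def power2_eq_square algebra_simps)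
lemma q_self_neg: "(b::quat) = - b \<Longrightarrow> b = 0"
  by (cases b) (simp add: qdefs)

lemma qinv_r: "x \<noteq> 0 \<Longrightarrow> x * qinv x = 1"
  using qn_pos[of x] unfolding qinv_def
  by (metis mult.assoc q_mult_cnj qr_comm qr_mult qr_1 nonzero_mult_div_cancel_left div_by_1 less_irrefl times_divide_eq_right mult.right_neutral)

lemma qinv_l: "x \<noteq> 0 \<Longrightarrow> qinv x * x = 1"
  using qn_pos[of x] unfolding qinv_def
  by (metis mult.assoc q_cnj_mult qr_mult qr_1 nonzero_mult_div_cancel_left div_by_1 less_irrefl times_divide_eq_right mult.right_neutral)

lemma qmult_eq0: "(x::quat) * y = 0 \<longleftrightarrow> x = 0 \<or> y = 0"
proof
  assume h: "x * y = 0"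
  show "x = 0 \<or> y = 0"
  proof (rule disjCI)
    assume "\<not> y = 0"
    hence "x * y * qinv y = x" using qinv_r[of y] by (simp add: mult.assoc)
    with h show "x = 0" by simp
  qed
qed auto

definition KM :: "nat \<Rightarrow> nat \<Rightarrow> nat \<Rightarrow> (nat \<Rightarrow> quat) \<Rightarrow> quat \<Rightarrow> quat \<Rightarrow> quat \<Rightarrow> quat \<Rightarrow> qmat" where
  "KM n p q d aa ab ba bb = (\<lambda>i j. if i \<in> {1..n} \<and> j \<in> {1..n} then
     (if i = p \<and> j = p then aa else if i = p \<and> j = q then ab else
      if i = q \<and> j = p then ba else if i = q \<and> j = q then bb else
      if i = j then d i else 0) else 0)"

lemma sum_single:
  assumes "finite A" "k \<in> A" "\<forall>i\<in>A. i \<noteq> k \<longrightarrow> f i = 0"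
  shows "sum f A = f k"
proof -
  have "sum f A = sum f {k}"
    by (rule sum.mono_neutral_right) (use assms in auto)
  then show ?thesis by simp
qed

lemma sum_two:
  assumes "finite A" "p \<in> A" "q \<in> A" "p \<noteq> q" "\<forall>i\<in>A. i \<noteq> p \<and> i \<noteq> q \<longrightarrow> f i = 0"
  shows "sum f A = f p + f q"
proof -
  have "sum f A = sum f {p, q}"
    by (rule sum.mono_neutral_right) (use assms in auto)
  then show ?thesis using assms(4) by simp
qed

lemma vmul_KM:
  assumes "p \<in> {1..n}" "q \<in> {1..n}" "p \<noteq> q"
  shows "vmul n x (adj (KM n p q d aa ab ba bb)) k =
    (if k \<in> {1..n} then (if k = p then x p * qcnj aa + x q * qcnj ab
      else if k = q then x p * qcnj ba + x q * qcnj bb else x k * qcnj (d k)) else 0)"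
proof (cases "k \<in> {1..n}")
  case False show ?thesis unfolding vmul_def if_not_P[OF False] by (rule refl)
next
  case k: True
  let ?f = "\<lambda>i. x i * qcnj (KM n p q d aa ab ba bb k i)"
  have s: "vmul n x (adj (KM n p q d aa ab ba bb)) k = sum ?f {1..n}"
    using k by (simp add: vmul_def adj_def)
  show ?thesis
  proof (cases "k = p \<or> k = q")
    case True
    have "sum ?f {1..n} = ?f p + ?f q"
      by (rule sum_two) (use assms True in \<open>auto simp: KM_def\<close>)
    then show ?thesis using s True k assms by (auto simp: KM_def)
  next
    case False
    have "sum ?f {1..n} = ?f k"
      by (rule sum_single) (use assms False k in \<open>auto simp: KM_def\<close>)
    then show ?thesis using s False k assms by (auto simp: KM_def)
  qed
qed

lemma KM_entries:
  assumes "p \<in> {1..n}" "q \<in> {1..n}" "p \<noteq> q"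
  shows "KM n p q d aa ab ba bb p p = aa" "KM n p q d aa ab ba bb p q = ab"
    "KM n p q d aa ab ba bb q p = ba" "KM n p q d aa ab ba bb q q = bb"
    "k \<in> {1..n} \<Longrightarrow> k \<noteq> p \<Longrightarrow> k \<noteq> q \<Longrightarrow> KM n p q d aa ab ba bb k k = d k"
    "i \<noteq> l \<Longrightarrow> \<not> (i = p \<and> l = q) \<Longrightarrow> \<not> (i = q \<and> l = p) \<Longrightarrow> KM n p q d aa ab ba bb i l = 0"
  using assms by (auto simp: KM_def)

lemma mmul_KM:
  fixes d :: "nat \<Rightarrow> quat" and aa ab ba bb :: quat
  assumes "p \<in> {1..n}" "q \<in> {1..n}" "p \<noteq> q" "i \<in> {1..n}" "j \<in> {1..n}"
  defines "B \<equiv> KM n p q d aa ab ba bb"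
  shows "mmul n B (adj B) i j =
    (if i = p \<and> j = p then aa * qcnj aa + ab * qcnj ab
     else if i = p \<and> j = q then aa * qcnj ba + ab * qcnj bb
     else if i = q \<and> j = p then ba * qcnj aa + bb * qcnj ab
     else if i = q \<and> j = q then ba * qcnj ba + bb * qcnj bb
     else if i = j \<and> i \<noteq> p \<and> i \<noteq> q then d i * qcnj (d i) else 0)"
proof -
  note E = KM_entries[OF assms(1-3), where d=d and aa=aa and ab=ab and ba=ba and bb=bb, folded B_def]
  let ?f = "\<lambda>k. B i k * qcnj (B j k)"
  have s: "mmul n B (adj B) i j = sum ?f {1..n}"
    by (simp add: mmul_def adj_def)
  show ?thesis
  proof (cases "(i = p \<or> i = q) \<and> (j = p \<or> j = q)")
    case True
    have "sum ?f {1..n} = ?f p + ?f q"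
    proof (rule sum_two)
      show "\<forall>k\<in>{1..n}. k \<noteq> p \<and> k \<noteq> q \<longrightarrow> ?f k = 0"
        using True E(6) assms(3) by auto
    qed (use assms in auto)
    then show ?thesis using s True E(1-4) assms(3) by auto
  next
    case F: False
    show ?thesis
    proof (cases "i = p \<or> i = q")
      case True
      then have jn: "j \<noteq> p" "j \<noteq> q" using F by auto
      have "sum ?f {1..n} = 0"
      proof (rule sum.neutral, intro ballI)
        fix k assume "k \<in> {1..n}"
        show "?f k = 0"
        proof (cases "k = j")
          case True then show ?thesis using E(6)[of i k] jn \<open>i = p \<or> i = q\<close> by auto
        next
          case False then show ?thesis using E(6)[of j k] jn by auto
        qed
      qed
      then show ?thesis using s True jn by auto
    next
      case False
      have "sum ?f {1..n} = ?f i"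
        by (rule sum_single) (use assms False E(6) in auto)
      then show ?thesis using s False assms E(5)[of i] E(6)[of j i] by auto
    qed
  qed
qed

lemma idm_helper: assumes c1: "\<not>(i = p \<and> j = p)" and c2: "\<not>(i = p \<and> j = q)" and c3: "\<not>(i = q \<and> j = p)" and c4: "\<not>(i = q \<and> j = q)"
 and ij: "i \<in> {1..n}" and a4: "\<forall>k\<in>{1..n}. k \<noteq> p \<and> k \<noteq> q \<longrightarrow> d k * qcnj (d k) = 1"
  shows "(if i = p \<and> j = p then aa * qcnj aa + ab * qcnj ab
     else if i = p \<and> j = q then aa * qcnj ba + ab * qcnj bb
     else if i = q \<and> j = p then ba * qcnj aa + bb * qcnj ab
     else if i = q \<and> j = q then ba * qcnj ba + bb * qcnj bb
     else if i = j \<and> i \<noteq> p \<and> i \<noteq> q then d i * qcnj (d i) else 0) = idm n i j"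
proof (cases "i = j")
  case True
  then have "i \<noteq> p" "i \<noteq> q" using c1 c4 by auto
  then show ?thesis unfolding idm_def if_not_P[OF c1] if_not_P[OF c2] if_not_P[OF c3] if_not_P[OF c4]
    using True ij a4 by simp
next
  case False
  then show ?thesis unfolding idm_def if_not_P[OF c1] if_not_P[OF c2] if_not_P[OF c3] if_not_P[OF c4]
    by simp
qed

lemma KM_out: assumes "i \<notin> {1..n} \<or> j \<notin> {1..n}" shows "KM n p q d aa ab ba bb i j = 0"
proof -
  have h: "\<not> (i \<in> {1..n} \<and> j \<in> {1..n})" using assms by blast
  show ?thesis unfolding KM_def if_not_P[OF h] by (rule refl)
qed

lemma KM_Sp:
  assumes "p \<in> {1..n}" "q \<in> {1..n}" "p \<noteq> q"
    and "\<forall>k\<in>{1..n}. k \<noteq> p \<and> k \<noteq> q \<longrightarrow> d k * qcnj (d k) = 1"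
    and "aa * qcnj aa + ab * qcnj ab = 1" "aa * qcnj ba + ab * qcnj bb = 0"
    and "ba * qcnj aa + bb * qcnj ab = 0" "ba * qcnj ba + bb * qcnj bb = 1"
  shows "KM n p q d aa ab ba bb \<in> Kpq n p q"
proof -
  have "mmul n (KM n p q d aa ab ba bb) (adj (KM n p q d aa ab ba bb)) = idm n"
  proof (intro ext)
    fix i j
    show "mmul n (KM n p q d aa ab ba bb) (adj (KM n p q d aa ab ba bb)) i j = idm n i j"
    proof (cases "i \<in> {1..n} \<and> j \<in> {1..n}")
      case True
      have e: "mmul n (KM n p q d aa ab ba bb) (adj (KM n p q d aa ab ba bb)) i j = (if i = p \<and> j = p then aa * qcnj aa + ab * qcnj ab
     else if i = p \<and> j = q then aa * qcnj ba + ab * qcnj bb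
     else if i = q \<and> j = p then ba * qcnj aa + bb * qcnj ab
     else if i = q \<and> j = q then ba * qcnj ba + bb * qcnj bb
     else if i = j \<and> i \<noteq> p \<and> i \<noteq> q then d i * qcnj (d i) else 0)"
        using True by (intro mmul_KM assms(1-3)) auto
      have ij: "i \<in> {1..n}" "j \<in> {1..n}" using True by auto
      show ?thesis
      proof (cases "i = p \<and> j = p")
        case True then show ?thesis unfolding e idm_def using ij assms(5) by simp
      next
        case c1: False show ?thesis
        proof (cases "i = p \<and> j = q")
          case True then show ?thesis unfolding e idm_def using assms(3,6) by simp
        next
          case c2: False show ?thesis
          proof (cases "i = q \<and> j = p")
            case True then show ?thesis unfolding e idm_def using assms(3,7) by simp
          next
            case c3: False show ?thesis
            proof (cases "i = q \<and> j = q")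
              case True then show ?thesis unfolding e idm_def using ij assms(3,8) by simp
            next
              case c4: False
              show ?thesis unfolding e by (rule idm_helper[OF c1 c2 c3 c4 ij(1) assms(4)])
            qed
          qed
        qed
      qed
    next
      case False
      have "\<forall>k. KM n p q d aa ab ba bb i k * qcnj (KM n p q d aa ab ba bb j k) = 0"
        using False KM_out[of i n k j] KM_out[of j n k] by (metis KM_out mult_zero_left mult_zero_right qcnj_0)
      moreover have "\<not> (i = j \<and> i \<in> {1..n})" using False by blast
      ultimately show ?thesis unfolding mmul_def adj_def idm_def if_not_P[OF \<open>\<not> (i = j \<and> i \<in> {1..n})\<close>] by simp
    qed
  qed
  moreover have "is_qmat n (KM n p q d aa ab ba bb)"
    unfolding is_qmat_def using KM_out by blast
  moreover have "\<forall>i j. i \<noteq> j \<and> (i, j) \<noteq> (p, q) \<and> (i, j) \<noteq> (q, p) \<longrightarrow> KM n p q d aa ab ba bb i j = 0"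
    using KM_entries(6)[OF assms(1-3)] by blast
  ultimately show ?thesis
    unfolding Kpq_def Sp_def by blast
qed

lemma Kpq_KM:
  assumes "B \<in> Kpq n p q" "p \<in> {1..n}" "q \<in> {1..n}" "p \<noteq> q"
  shows "B = KM n p q (\<lambda>k. B k k) (B p p) (B p q) (B q p) (B q q)"
proof (intro ext)
  fix i j
  note E = KM_entries[OF assms(2-4), where d="\<lambda>k. B k k" and aa="B p p" and ab="B p q" and ba="B q p" and bb="B q q"]
  have qm: "is_qmat n B" and off: "\<forall>i j. i \<noteq> j \<and> (i, j) \<noteq> (p, q) \<and> (i, j) \<noteq> (q, p) \<longrightarrow> B i j = 0"
    using assms(1) by (auto simp: Kpq_def Sp_def)
  show "B i j = KM n p q (\<lambda>k. B k k) (B p p) (B p q) (B q p) (B q q) i j"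
  proof (cases "i \<in> {1..n} \<and> j \<in> {1..n}")
    case False
    then have "B i j = 0" using qm unfolding is_qmat_def by blast
    then show ?thesis using KM_out False by metis
  next
    case True
    show ?thesis
    proof (cases "i = j")
      case ij: True
      show ?thesis
      proof (cases "i = p")
        case True then show ?thesis using ij E(1) by simp
      next
        case False
        show ?thesis
        proof (cases "i = q")
          case True then show ?thesis using ij E(4) by simp
        next
          case F2: False
          then show ?thesis using ij False E(5)[of i] True by simp
        qed
      qed
    next
      case False
      show ?thesis
      proof (cases "i = p \<and> j = q")
        case True then show ?thesis using E(2) by simp
      next
        case c1: False
        show ?thesis
        proof (cases "i = q \<and> j = p")
          case True then show ?thesis using E(3) by simp
        next
          case c2: False
          then have "B i j = 0" using off False c1 by blast
          then show ?thesis using E(6)[of i j] False c1 c2 by simp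
        qed
      qed
    qed
  qed
qed

lemma Kpq_conds:
  assumes "B \<in> Kpq n p q" "p \<in> {1..n}" "q \<in> {1..n}" "p \<noteq> q"
  shows "\<forall>k\<in>{1..n}. k \<noteq> p \<and> k \<noteq> q \<longrightarrow> B k k * qcnj (B k k) = 1"
    and "B p p * qcnj (B p p) + B p q * qcnj (B p q) = 1" "B p p * qcnj (B q p) + B p q * qcnj (B q q) = 0"
    and "B q p * qcnj (B p p) + B q q * qcnj (B p q) = 0" "B q p * qcnj (B q p) + B q q * qcnj (B q q) = 1"
proof -
  have e: "B = KM n p q (\<lambda>k. B k k) (B p p) (B p q) (B q p) (B q q)" by (rule Kpq_KM[OF assms])
  have I: "mmul n B (adj B) = idm n" using assms(1) by (simp add: Kpq_def Sp_def)
  note M = mmul_KM[OF assms(2-4), where d="\<lambda>k. B k k" and aa="B p p" and ab="B p q" and ba="B q p" and bb="B q q", folded e, unfolded I]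
  show "\<forall>k\<in>{1..n}. k \<noteq> p \<and> k \<noteq> q \<longrightarrow> B k k * qcnj (B k k) = 1"
  proof (intro ballI impI)
    fix k assume k: "k \<in> {1..n}" "k \<noteq> p \<and> k \<noteq> q"
    have "idm n k k = B k k * qcnj (B k k)" using M[OF k(1) k(1)] k(2) by simp
    then show "B k k * qcnj (B k k) = 1" using k(1) by (simp add: idm_def)
  qed
  show "B p p * qcnj (B p p) + B p q * qcnj (B p q) = 1" using M[of p p] assms by (auto simp: idm_def)
  show "B p p * qcnj (B q p) + B p q * qcnj (B q q) = 0" using M[of p q] assms by (auto simp: idm_def)
  show "B q p * qcnj (B p p) + B q q * qcnj (B p q) = 0" using M[of q p] assms by (auto simp: idm_def)
  show "B q p * qcnj (B q p) + B q q * qcnj (B q q) = 1" using M[of q q] assms by (auto simp: idm_def)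
qed

lemma Diag_KM:
  assumes "p \<in> {1..n}" "q \<in> {1..n}" "p \<noteq> q"
  shows "Diag n \<gamma> = KM n p q \<gamma> (\<gamma> p) 0 0 (\<gamma> q)"
  using assms by (auto simp: Diag_def KM_def fun_eq_iff)

lemma Fw_char:
  assumes perm: "w permutes {1..n}" and nu: "\<nu> \<in> {1..n}"
  shows "Fw n w \<nu> = {x. \<forall>k. k \<notin> w ` {1..\<nu>} \<longrightarrow> x k = 0}"
proof -
  have inj: "inj w" using perm by (rule permutes_inj)
  have F: "Fw n w \<nu> = {(\<lambda>i. \<Sum>k\<in>{1..\<nu>}. x k i) | x. \<forall>k\<in>{1..\<nu>}. x k \<in> Hline (w k)}"
    using nu by (simp add: Fw_def flag_of_lines_def)
  show ?thesis
  proof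
    show "Fw n w \<nu> \<subseteq> {x. \<forall>k. k \<notin> w ` {1..\<nu>} \<longrightarrow> x k = 0}"
    proof
      fix h assume "h \<in> Fw n w \<nu>"
      then obtain x where h: "h = (\<lambda>i. \<Sum>k\<in>{1..\<nu>}. x k i)" and x: "\<forall>k\<in>{1..\<nu>}. x k \<in> Hline (w k)"
        using F by auto
      have "h i = 0" if "i \<notin> w ` {1..\<nu>}" for i
      proof -
        have "x k i = 0" if k: "k \<in> {1..\<nu>}" for k
        proof -
          have "x k \<in> Hline (w k)" using x k by blast
          then obtain c where "x k = lscale c (evec (w k))" unfolding Hline_def by blast
          moreover have "i \<noteq> w k" using k \<open>i \<notin> w ` {1..\<nu>}\<close> by auto
          ultimately show ?thesis by (simp add: lscale_def evec_def)
        qed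
        then show ?thesis unfolding h by simp
      qed
      then show "h \<in> {x. \<forall>k. k \<notin> w ` {1..\<nu>} \<longrightarrow> x k = 0}" by blast
    qed
  next
    show "{x. \<forall>k. k \<notin> w ` {1..\<nu>} \<longrightarrow> x k = 0} \<subseteq> Fw n w \<nu>"
    proof
      fix h :: qvec assume hs: "h \<in> {x. \<forall>k. k \<notin> w ` {1..\<nu>} \<longrightarrow> x k = 0}"
      define x where "x = (\<lambda>k. lscale (h (w k)) (evec (w k)))"
      have xl: "\<forall>k\<in>{1..\<nu>}. x k \<in> Hline (w k)" by (auto simp: x_def Hline_def)
      have "h = (\<lambda>i. \<Sum>k\<in>{1..\<nu>}. x k i)"
      proof
        fix i show "h i = (\<Sum>k\<in>{1..\<nu>}. x k i)"
        proof (cases "i \<in> w ` {1..\<nu>}")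
          case True
          then obtain k0 where k0: "k0 \<in> {1..\<nu>}" "i = w k0" by auto
          have "(\<Sum>k\<in>{1..\<nu>}. x k i) = x k0 i"
          proof (rule sum_single)
            show "\<forall>k\<in>{1..\<nu>}. k \<noteq> k0 \<longrightarrow> x k i = 0"
              using inj k0 by (auto simp: x_def lscale_def evec_def inj_eq)
          qed (use k0 in auto)
          then show ?thesis using k0 by (simp add: x_def lscale_def evec_def)
        next
          case False
          then have "x k i = 0" if "k \<in> {1..\<nu>}" for k
            using that by (auto simp: x_def lscale_def evec_def)
          then show ?thesis using False hs by simp
        qed
      qed
      then show "h \<in> Fw n w \<nu>" using F xl by blast
    qed
  qed
qed

lemma Fw_out: assumes h: "\<nu> \<notin> {1..n}" shows "Fw n w \<nu> = {}"
  unfolding Fw_def flag_of_lines_def if_not_P[OF h] by (rule refl)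

locale flagctx =
  fixes n :: nat and w :: "nat \<Rightarrow> nat" and i j p q :: nat
  assumes perm: "w permutes {1..n}" and i: "i \<in> {1..n}" and j: "j \<in> {1..n}"
    and ij: "i < j" and wi: "w i = p" and wj: "w j = q"
begin

lemma inj_w: "inj w" using perm by (rule permutes_inj)

lemma pq: "p \<in> {1..n}" "q \<in> {1..n}" "p \<noteq> q"
proof -
  show "p \<in> {1..n}" using permutes_in_image[OF perm] i wi by blast
  show "q \<in> {1..n}" using permutes_in_image[OF perm] j wj by blast
  show "p \<noteq> q" using inj_w wi wj ij by (metis injD less_irrefl)
qed

lemma W_sub: assumes "\<nu> \<in> {1..n}" shows "w ` {1..\<nu>} \<subseteq> {1..n}"
proof
  fix y assume "y \<in> w ` {1..\<nu>}"
  then obtain x where x: "x \<in> {1..\<nu>}" "y = w x" by blast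
  then have "x \<in> {1..n}" using assms by simp
  then show "y \<in> {1..n}" using permutes_in_image[OF perm, of x] x(2) by blast
qed

lemma W_gen: assumes "k \<in> {1..n}" shows "(w k \<in> w ` {1..\<nu>}) = (k \<le> \<nu>)"
proof
  assume "w k \<in> w ` {1..\<nu>}"
  then obtain x where x: "x \<in> {1..\<nu>}" "w k = w x" by blast
  then have "k = x" using inj_w by (simp add: inj_eq)
  then show "k \<le> \<nu>" using x by simp
next
  assume "k \<le> \<nu>"
  then have "k \<in> {1..\<nu>}" using assms by simp
  then show "w k \<in> w ` {1..\<nu>}" by (rule imageI)
qed

lemma W_p: "(p \<in> w ` {1..\<nu>}) = (i \<le> \<nu>)"
  using W_gen[OF i] wi by simp

lemma W_q: "(q \<in> w ` {1..\<nu>}) = (j \<le> \<nu>)"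
  using W_gen[OF j] wj by simp

definition Mf :: "quat \<Rightarrow> quat \<Rightarrow> qflag" where
  "Mf a b = (\<lambda>\<nu>. if \<nu> \<in> {1..n} then (if i \<le> \<nu> \<and> \<nu> < j then
      {x. (\<forall>k. k \<notin> insert q (w ` {1..\<nu>}) \<longrightarrow> x k = 0) \<and> (\<exists>c. x p = c * a \<and> x q = c * b)}
     else {x. \<forall>k. k \<notin> w ` {1..\<nu>} \<longrightarrow> x k = 0}) else {})"

lemma Mf_out: assumes h: "\<nu> \<notin> {1..n}" shows "Mf a b \<nu> = {}"
  unfolding Mf_def if_not_P[OF h] by (rule refl)

lemma Mf_mid: assumes h: "\<nu> \<in> {1..n}" and h2: "i \<le> \<nu> \<and> \<nu> < j"
  shows "Mf a b \<nu> = {x. (\<forall>k. k \<notin> insert q (w ` {1..\<nu>}) \<longrightarrow> x k = 0) \<and> (\<exists>c. x p = c * a \<and> x q = c * b)}"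
  unfolding Mf_def if_P[OF h] if_P[OF h2] by (rule refl)

lemma Mf_oth: assumes h: "\<nu> \<in> {1..n}" and h2: "\<not> (i \<le> \<nu> \<and> \<nu> < j)"
  shows "Mf a b \<nu> = {x. \<forall>k. k \<notin> w ` {1..\<nu>} \<longrightarrow> x k = 0}"
  unfolding Mf_def if_P[OF h] if_not_P[OF h2] by (rule refl)

lemma Fw_M: "Fw n w = Mf 1 0"
proof
  fix \<nu>
  show "Fw n w \<nu> = Mf 1 0 \<nu>"
  proof (cases "\<nu> \<in> {1..n}")
    case False then show ?thesis by (simp only: Fw_out[OF False] Mf_out[OF False])
  next
    case nu: True
    show ?thesis
    proof (cases "i \<le> \<nu> \<and> \<nu> < j")
      case True
      then have qW: "q \<notin> w ` {1..\<nu>}" using W_q by auto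
      have "\<forall>x::qvec. (\<forall>k. k \<notin> w ` {1..\<nu>} \<longrightarrow> x k = 0) =
        ((\<forall>k. k \<notin> insert q (w ` {1..\<nu>}) \<longrightarrow> x k = 0) \<and> (\<exists>c. x p = c * 1 \<and> x q = c * 0))"
      proof (rule allI, rule iffI)
        fix x :: qvec assume h: "\<forall>k. k \<notin> w ` {1..\<nu>} \<longrightarrow> x k = 0"
        then have "x q = 0" using qW by blast
        then show "(\<forall>k. k \<notin> insert q (w ` {1..\<nu>}) \<longrightarrow> x k = 0) \<and> (\<exists>c. x p = c * 1 \<and> x q = c * 0)"
          using h by auto
      next
        fix x :: qvec assume "(\<forall>k. k \<notin> insert q (w ` {1..\<nu>}) \<longrightarrow> x k = 0) \<and> (\<exists>c. x p = c * 1 \<and> x q = c * 0)"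
        then obtain c where h: "\<forall>k. k \<notin> insert q (w ` {1..\<nu>}) \<longrightarrow> x k = 0" "x p = c * 1" "x q = c * 0" by blast
        then show "\<forall>k. k \<notin> w ` {1..\<nu>} \<longrightarrow> x k = 0" by (metis insert_iff mult_zero_right)
      qed
      then show ?thesis unfolding Fw_char[OF perm nu] Mf_mid[OF nu True] by blast
    next
      case False
      then show ?thesis by (simp only: Fw_char[OF perm nu] Mf_oth[OF nu False])
    qed
  qed
qed

lemma Fw_sw_M: "Fw n (transpose p q \<circ> w) = Mf 0 1"
proof
  fix \<nu>
  have perm2: "(transpose p q \<circ> w) permutes {1..n}"
    using permutes_compose[OF perm permutes_swap_id[OF pq(1,2)]] .
  show "Fw n (transpose p q \<circ> w) \<nu> = Mf 0 1 \<nu>"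
  proof (cases "\<nu> \<in> {1..n}")
    case False then show ?thesis by (simp only: Fw_out[OF False] Mf_out[OF False])
  next
    case nu: True
    have im: "(transpose p q \<circ> w) ` {1..\<nu>} = transpose p q ` (w ` {1..\<nu>})" by (simp add: image_comp)
    show ?thesis
    proof (cases "i \<le> \<nu> \<and> \<nu> < j")
      case True
      then have qW: "q \<notin> w ` {1..\<nu>}" and pW: "p \<in> w ` {1..\<nu>}" using W_q W_p by auto
      have tr: "k \<in> transpose p q ` (w ` {1..\<nu>}) \<longleftrightarrow> k \<in> insert q (w ` {1..\<nu>}) \<and> k \<noteq> p" for k
        using qW pW pq(3) unfolding in_transpose_image_iff by (auto simp: transpose_def)
      have "\<forall>x::qvec. (\<forall>k. k \<notin> transpose p q ` (w ` {1..\<nu>}) \<longrightarrow> x k = 0) =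
        ((\<forall>k. k \<notin> insert q (w ` {1..\<nu>}) \<longrightarrow> x k = 0) \<and> (\<exists>c. x p = c * 0 \<and> x q = c * 1))"
      proof (rule allI, rule iffI)
        fix x :: qvec assume h: "\<forall>k. k \<notin> transpose p q ` (w ` {1..\<nu>}) \<longrightarrow> x k = 0"
        then have "x p = 0" using pq(3) tr by blast
        then show "(\<forall>k. k \<notin> insert q (w ` {1..\<nu>}) \<longrightarrow> x k = 0) \<and> (\<exists>c. x p = c * 0 \<and> x q = c * 1)"
          using h tr by auto
      next
        fix x :: qvec assume "(\<forall>k. k \<notin> insert q (w ` {1..\<nu>}) \<longrightarrow> x k = 0) \<and> (\<exists>c. x p = c * 0 \<and> x q = c * 1)"
        then obtain c where h: "\<forall>k. k \<notin> insert q (w ` {1..\<nu>}) \<longrightarrow> x k = 0" "x p = c * 0" "x q = c * 1" by blast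
        show "\<forall>k. k \<notin> transpose p q ` (w ` {1..\<nu>}) \<longrightarrow> x k = 0"
          using h tr by (metis mult_zero_right)
      qed
      then show ?thesis unfolding Fw_char[OF perm2 nu] im Mf_mid[OF nu True] by blast
    next
      case False
      then have "(p \<in> w ` {1..\<nu>}) = (q \<in> w ` {1..\<nu>})" using W_p W_q ij by auto
      then have "transpose p q ` (w ` {1..\<nu>}) = w ` {1..\<nu>}" by (rule transpose_image_eq)
      then show ?thesis by (simp only: Fw_char[OF perm2 nu] im Mf_oth[OF nu False])
    qed
  qed
qed

lemma Mf_scale:
  assumes "t \<noteq> 0" shows "Mf (t * a) (t * b) = Mf a b"
proof -
  have *: "(\<exists>c. x p = c * (t * a) \<and> x q = c * (t * b)) = (\<exists>c. x p = c * a \<and> x q = c * b)" for x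
  proof
    assume "\<exists>c. x p = c * (t * a) \<and> x q = c * (t * b)"
    then obtain c where "x p = c * (t * a) \<and> x q = c * (t * b)" by blast
    then show "\<exists>c. x p = c * a \<and> x q = c * b" by (metis mult.assoc)
  next
    assume "\<exists>c. x p = c * a \<and> x q = c * b"
    then obtain c where c: "x p = c * a \<and> x q = c * b" by blast
    have "c = (c * qinv t) * t" using qinv_l[OF assms] by (simp add: mult.assoc)
    then have "x p = (c * qinv t) * (t * a) \<and> x q = (c * qinv t) * (t * b)"
      using c by (metis mult.assoc)
    then show "\<exists>c. x p = c * (t * a) \<and> x q = c * (t * b)" by blast
  qed
  show ?thesis unfolding Mf_def by (simp only: *)
qed

lemma Mf_eq:
  assumes "Mf a b = Mf a' b'" shows "\<exists>c. a' = c * a \<and> b' = c * b"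
proof -
  have iW: "p \<in> w ` {1..i}" "q \<notin> w ` {1..i}" using W_p W_q ij by auto
  define v where "v = (\<lambda>k. if k = p then a' else if k = q then b' else (0::quat))"
  have "v \<in> Mf a' b' i" using i ij iW pq(3) unfolding Mf_def v_def
    by (auto intro!: exI[of _ 1])
  then have "v \<in> Mf a b i" using assms by simp
  then obtain c where "v p = c * a \<and> v q = c * b" using i ij unfolding Mf_def by auto
  then show ?thesis using pq(3) unfolding v_def by auto
qed

end

context flagctx begin

lemma act_KM:
  assumes dnz: "\<forall>k\<in>{1..n}. k \<noteq> p \<and> k \<noteq> q \<longrightarrow> d k \<noteq> 0"
  and sur: "\<forall>yp yq. \<exists>xp xq. xp * qcnj aa + xq * qcnj ab = yp \<and> xp * qcnj ba + xq * qcnj bb = yq"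
  shows "flag_act n (KM n p q d aa ab ba bb) (Mf a b) = Mf (a * qcnj aa + b * qcnj ab) (a * qcnj ba + b * qcnj bb)"
proof
  fix \<nu>
  define T where "T = (\<lambda>h. vmul n h (adj (KM n p q d aa ab ba bb)))"
  have TE: "T h k = (if k \<in> {1..n} then (if k = p then h p * qcnj aa + h q * qcnj ab
      else if k = q then h p * qcnj ba + h q * qcnj bb else h k * qcnj (d k)) else 0)" for h k
    unfolding T_def by (rule vmul_KM[OF pq])
  have FA: "flag_act n (KM n p q d aa ab ba bb) F \<nu> = T ` F \<nu>" for F
    unfolding flag_act_def T_def by (rule refl)
  have inv: "y * qinv (qcnj (d k)) * qcnj (d k) = y" if "k \<in> {1..n}" "k \<noteq> p" "k \<noteq> q" for y k
  proof -
    have "qcnj (d k) \<noteq> 0" using dnz that by simp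
    then show ?thesis using qinv_l by (simp add: mult.assoc)
  qed
  define a' where "a' = a * qcnj aa + b * qcnj ab"
  define b' where "b' = a * qcnj ba + b * qcnj bb"
  have lin: "c * a * qcnj aa + c * b * qcnj ab = c * a'" "c * a * qcnj ba + c * b * qcnj bb = c * b'" for c
    unfolding a'_def b'_def by (simp_all add: algebra_simps)
  show "flag_act n (KM n p q d aa ab ba bb) (Mf a b) \<nu> = Mf a' b' \<nu>"
  proof (cases "\<nu> \<in> {1..n}")
    case False
    then show ?thesis unfolding FA Mf_out[OF False] by simp
  next
    case nu: True
    let ?W = "w ` {1..\<nu>}"
    have Wsub: "?W \<subseteq> {1..n}" by (rule W_sub[OF nu])
    show ?thesis
    proof (cases "i \<le> \<nu> \<and> \<nu> < j")
      case mid: True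
      have pW: "p \<in> ?W" and qW: "q \<notin> ?W" using mid W_p W_q by auto
      show ?thesis unfolding FA Mf_mid[OF nu mid]
      proof (rule set_eqI, rule iffI)
        fix y assume "y \<in> T ` {x. (\<forall>k. k \<notin> insert q ?W \<longrightarrow> x k = 0) \<and> (\<exists>c. x p = c * a \<and> x q = c * b)}"
        then obtain x c where x0: "\<forall>k. k \<notin> insert q ?W \<longrightarrow> x k = 0" and xc: "x p = c * a" "x q = c * b"
          and y: "y = T x" by blast
        have "y k = 0" if "k \<notin> insert q ?W" for k
        proof -
          have "k \<noteq> p" "k \<noteq> q" using that pW by auto
          then show ?thesis unfolding y TE using x0 that by simp
        qed
        moreover have "y p = c * a'" "y q = c * b'"
          unfolding y TE using pq xc lin by simp_all
        ultimately show "y \<in> {x. (\<forall>k. k \<notin> insert q ?W \<longrightarrow> x k = 0) \<and> (\<exists>c. x p = c * a' \<and> x q = c * b')}"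
          by blast
      next
        fix y :: qvec assume "y \<in> {x. (\<forall>k. k \<notin> insert q ?W \<longrightarrow> x k = 0) \<and> (\<exists>c. x p = c * a' \<and> x q = c * b')}"
        then obtain c where y0: "\<forall>k. k \<notin> insert q ?W \<longrightarrow> y k = 0" and yc: "y p = c * a'" "y q = c * b'"
          by blast
        define x where "x = (\<lambda>k. if k = p then c * a else if k = q then c * b
            else if k \<in> {1..n} then y k * qinv (qcnj (d k)) else 0)"
        have "T x = y"
        proof
          fix k
          show "T x k = y k"
          proof (cases "k \<in> {1..n}")
            case False
            then have "k \<notin> insert q ?W" using Wsub pq by auto
            then have "y k = 0" using y0 by blast
            moreover have "T x k = 0" unfolding TE if_not_P[OF False] by (rule refl)
            ultimately show ?thesis by simp
          next
            case True
            show ?thesis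
            proof (cases "k = p \<or> k = q")
              case True
              then show ?thesis using \<open>k \<in> {1..n}\<close> pq(3) yc lin unfolding TE x_def by auto
            next
              case False
              then show ?thesis using \<open>k \<in> {1..n}\<close> inv unfolding TE x_def by simp
            qed
          qed
        qed
        moreover have "\<forall>k. k \<notin> insert q ?W \<longrightarrow> x k = 0"
        proof (intro allI impI)
          fix k assume k: "k \<notin> insert q ?W"
          then have "k \<noteq> p" "k \<noteq> q" using pW by auto
          then show "x k = 0" using y0 k unfolding x_def by simp
        qed
        moreover have "x p = c * a" "x q = c * b" unfolding x_def using pq(3) by simp_all
        ultimately show "y \<in> T ` {x. (\<forall>k. k \<notin> insert q ?W \<longrightarrow> x k = 0) \<and> (\<exists>c. x p = c * a \<and> x q = c * b)}"
          by blast
      qed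
    next
      case oth: False
      have pqW: "(p \<in> ?W) = (q \<in> ?W)" using oth W_p W_q ij by auto
      show ?thesis unfolding FA Mf_oth[OF nu oth]
      proof (rule set_eqI, rule iffI)
        fix y assume "y \<in> T ` {x. \<forall>k. k \<notin> ?W \<longrightarrow> x k = 0}"
        then obtain x where x0: "\<forall>k. k \<notin> ?W \<longrightarrow> x k = 0" and y: "y = T x" by blast
        have "y k = 0" if "k \<notin> ?W" for k
        proof (cases "k = p \<or> k = q")
          case True
          then have "x p = 0" "x q = 0" using x0 that pqW by auto
          then show ?thesis unfolding y TE using True by auto
        next
          case False
          then show ?thesis unfolding y TE using x0 that by simp
        qed
        then show "y \<in> {x. \<forall>k. k \<notin> ?W \<longrightarrow> x k = 0}" by blast
      next
        fix y :: qvec assume "y \<in> {x. \<forall>k. k \<notin> ?W \<longrightarrow> x k = 0}"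
        then have y0: "\<forall>k. k \<notin> ?W \<longrightarrow> y k = 0" by blast
        obtain xp xq where xs: "(p \<in> ?W \<longrightarrow> xp * qcnj aa + xq * qcnj ab = y p \<and> xp * qcnj ba + xq * qcnj bb = y q)
            \<and> (p \<notin> ?W \<longrightarrow> xp = 0 \<and> xq = 0)"
        proof (cases "p \<in> ?W")
          case True
          then show ?thesis using sur that by blast
        next
          case False
          then show ?thesis using that[of 0 0] by blast
        qed
        define x where "x = (\<lambda>k. if k = p then xp else if k = q then xq
            else if k \<in> {1..n} then y k * qinv (qcnj (d k)) else 0)"
        have "T x = y"
        proof
          fix k
          show "T x k = y k"
          proof (cases "k \<in> {1..n}")
            case False
            then have "k \<notin> ?W" using Wsub by auto
            then have "y k = 0" using y0 by blast
            moreover have "T x k = 0" unfolding TE if_not_P[OF False] by (rule refl)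
            ultimately show ?thesis by simp
          next
            case True
            show ?thesis
            proof (cases "k = p \<or> k = q")
              case True
              show ?thesis
              proof (cases "p \<in> ?W")
                case pin: True
                then show ?thesis using \<open>k \<in> {1..n}\<close> \<open>k = p \<or> k = q\<close> pq(3) xs unfolding TE x_def by auto
              next
                case False
                then have "y p = 0" "y q = 0" using y0 pqW by auto
                then show ?thesis using \<open>k \<in> {1..n}\<close> \<open>k = p \<or> k = q\<close> pq(3) xs False unfolding TE x_def by auto
              qed
            next
              case False
              then show ?thesis using \<open>k \<in> {1..n}\<close> inv unfolding TE x_def by simp
            qed
          qed
        qed
        moreover have "\<forall>k. k \<notin> ?W \<longrightarrow> x k = 0"
        proof (intro allI impI)
          fix k assume k: "k \<notin> ?W"
          show "x k = 0"
          proof (cases "k = p \<or> k = q")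
            case True
            then have "p \<notin> ?W" using k pqW by auto
            then show ?thesis using xs True unfolding x_def by auto
          next
            case False
            then show ?thesis using y0 k unfolding x_def by simp
          qed
        qed
        ultimately show "y \<in> T ` {x. \<forall>k. k \<notin> ?W \<longrightarrow> x k = 0}" by blast
      qed
    qed
  qed
qed

end

lemma qr_add: "qr a + qr b = qr (a + b)" by (simp add: qdefs)
lemma qn_qr_mult: "qn (qr r * x) = r^2 * qn x" by (simp add: qdefs qn_def power2_eq_square algebra_simps)
lemma qn_cnj: "qn (qcnj x) = qn x" by (simp add: qdefs qn_def)
lemma qn_nonneg: "qn x \<ge> 0" by (simp add: qn_def)
lemma qn_neg: "qn (- x) = qn x" by (simp add: qdefs qn_def)
lemma neg_cnj: "(- x) * qcnj (- x) = x * qcnj x" by (simp add: qcnj_minus)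

context flagctx begin

lemma act_Kpq:
  assumes B: "B \<in> Kpq n p q"
  shows "flag_act n B (Mf a b) = Mf (a * qcnj (B p p) + b * qcnj (B p q)) (a * qcnj (B q p) + b * qcnj (B q q))"
proof -
  note cs = Kpq_conds[OF B pq]
  have e: "B = KM n p q (\<lambda>k. B k k) (B p p) (B p q) (B q p) (B q q)" by (rule Kpq_KM[OF B pq])
  have dnz: "\<forall>k\<in>{1..n}. k \<noteq> p \<and> k \<noteq> q \<longrightarrow> B k k \<noteq> 0"
    using cs(1) by fastforce
  have sur: "\<forall>yp yq. \<exists>xp xq. xp * qcnj (B p p) + xq * qcnj (B p q) = yp \<and> xp * qcnj (B q p) + xq * qcnj (B q q) = yq"
  proof (intro allI)
    fix yp yq
    let ?xp = "yp * B p p + yq * B q p" and ?xq = "yp * B p q + yq * B q q"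
    have "?xp * qcnj (B p p) + ?xq * qcnj (B p q) = yp * (B p p * qcnj (B p p) + B p q * qcnj (B p q)) + yq * (B q p * qcnj (B p p) + B q q * qcnj (B p q))"
      by (simp add: algebra_simps)
    also have "\<dots> = yp" using cs(2,4) by simp
    finally have 1: "?xp * qcnj (B p p) + ?xq * qcnj (B p q) = yp" .
    have "?xp * qcnj (B q p) + ?xq * qcnj (B q q) = yp * (B p p * qcnj (B q p) + B p q * qcnj (B q q)) + yq * (B q p * qcnj (B q p) + B q q * qcnj (B q q))"
      by (simp add: algebra_simps)
    also have "\<dots> = yq" using cs(3,5) by simp
    finally have 2: "?xp * qcnj (B q p) + ?xq * qcnj (B q q) = yq" .
    show "\<exists>xp xq. xp * qcnj (B p p) + xq * qcnj (B p q) = yp \<and> xp * qcnj (B q p) + xq * qcnj (B q q) = yq"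
      using 1 2 by blast
  qed
  show ?thesis by (subst e, rule act_KM[OF dnz sur])
qed

lemma act_Diag:
  assumes g: "\<forall>\<nu>\<in>{1..n}. \<gamma> \<nu> \<noteq> 0"
  shows "flag_act n (Diag n \<gamma>) (Mf a b) = Mf (a * qcnj (\<gamma> p)) (b * qcnj (\<gamma> q))"
proof -
  have dnz: "\<forall>k\<in>{1..n}. k \<noteq> p \<and> k \<noteq> q \<longrightarrow> \<gamma> k \<noteq> 0" using g by blast
  have gp: "qcnj (\<gamma> p) \<noteq> 0" "qcnj (\<gamma> q) \<noteq> 0" using g pq by auto
  have sur: "\<forall>yp yq. \<exists>xp xq. xp * qcnj (\<gamma> p) + xq * qcnj 0 = yp \<and> xp * qcnj 0 + xq * qcnj (\<gamma> q) = yq"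
  proof (intro allI)
    fix yp yq
    have "(yp * qinv (qcnj (\<gamma> p))) * qcnj (\<gamma> p) + (yq * qinv (qcnj (\<gamma> q))) * qcnj 0 = yp \<and>
          (yp * qinv (qcnj (\<gamma> p))) * qcnj 0 + (yq * qinv (qcnj (\<gamma> q))) * qcnj (\<gamma> q) = yq"
      using qinv_l[OF gp(1)] qinv_l[OF gp(2)] by (simp add: mult.assoc)
    then show "\<exists>xp xq. xp * qcnj (\<gamma> p) + xq * qcnj 0 = yp \<and> xp * qcnj 0 + xq * qcnj (\<gamma> q) = yq" by blast
  qed
  have "flag_act n (Diag n \<gamma>) (Mf a b) = Mf (a * qcnj (\<gamma> p) + b * qcnj 0) (a * qcnj 0 + b * qcnj (\<gamma> q))"
    unfolding Diag_KM[OF pq] by (rule act_KM[OF dnz sur])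
  then show ?thesis by simp
qed

lemma Swpq_eq: "Swpq n w p q = (\<lambda>B. flag_act n B (Mf 1 0)) ` Kpq n p q"
  unfolding Swpq_def Fw_M by (rule refl)

lemma act_Kpq_10:
  assumes B: "B \<in> Kpq n p q"
  shows "flag_act n B (Mf 1 0) = Mf (qcnj (B p p)) (qcnj (B q p))"
  using act_Kpq[OF B, of 1 0] by simp

lemma S_char: "F \<in> Swpq n w p q \<longleftrightarrow> (\<exists>a b. (a \<noteq> 0 \<or> b \<noteq> 0) \<and> F = Mf a b)"
proof
  assume "F \<in> Swpq n w p q"
  then obtain B where B: "B \<in> Kpq n p q" and F: "F = flag_act n B (Mf 1 0)" unfolding Swpq_eq by blast
  note cs = Kpq_conds[OF B pq]
  have "B p p \<noteq> 0 \<or> B q p \<noteq> 0"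
  proof (rule ccontr)
    assume "\<not> (B p p \<noteq> 0 \<or> B q p \<noteq> 0)"
    then have z: "B p p = 0" "B q p = 0" by auto
    have "B p q * qcnj (B p q) = 1" using cs(2) z by simp
    moreover have "B q q * qcnj (B q q) = 1" using cs(5) z by simp
    moreover have "B p q * qcnj (B q q) = 0" using cs(3) z by simp
    ultimately show False by (metis qmult_eq0 qcnj_eq0 mult_zero_left zero_neq_one)
  qed
  then show "\<exists>a b. (a \<noteq> 0 \<or> b \<noteq> 0) \<and> F = Mf a b"
    using F act_Kpq_10[OF B] by (metis qcnj_eq0)
next
  assume "\<exists>a b. (a \<noteq> 0 \<or> b \<noteq> 0) \<and> F = Mf a b"
  then obtain a b where ab: "a \<noteq> 0 \<or> b \<noteq> 0" and F: "F = Mf a b" by blast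
  show "F \<in> Swpq n w p q"
  proof (cases "a = 0")
    case True
    then have b: "b \<noteq> 0" using ab by simp
    have "F = Mf (b * 0) (b * 1)" using F True by simp
    also have "\<dots> = Mf 0 1" by (rule Mf_scale[OF b])
    finally have F01: "F = Mf 0 1" .
    define B where "B = KM n p q (\<lambda>_. 1) 0 1 1 0"
    have B: "B \<in> Kpq n p q" unfolding B_def by (rule KM_Sp[OF pq]) simp_all
    note E = KM_entries[OF pq, where d="\<lambda>_. 1" and aa=0 and ab=1 and ba=1 and bb=0, folded B_def]
    have "flag_act n B (Mf 1 0) = Mf 0 1" unfolding act_Kpq_10[OF B] E by simp
    then show ?thesis unfolding Swpq_eq F01 using B by (metis image_eqI)
  next
    case False
    define u where "u = qinv a * b"
    have "F = Mf (a * 1) (a * u)" unfolding F u_def using qinv_r[OF False] by (simp add: mult.assoc[symmetric])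
    also have "\<dots> = Mf 1 u" by (rule Mf_scale[OF False])
    finally have F1: "F = Mf 1 u" .
    define \<sigma> where "\<sigma> = 1 / sqrt (1 + qn u)"
    have pos: "1 + qn u > 0" using qn_nonneg[of u] by linarith
    have sig: "\<sigma>^2 * (1 + qn u) = 1" unfolding \<sigma>_def using pos
      by (simp add: power_divide)
    have sig0: "\<sigma> \<noteq> 0" unfolding \<sigma>_def using pos by simp
    define s where "s = qr \<sigma>"
    have s0: "s \<noteq> 0" unfolding s_def using sig0 by simp
    define B where "B = KM n p q (\<lambda>_. 1) s (- (s * u)) (s * qcnj u) s"
    have c1: "s * qcnj s + - (s * u) * qcnj (- (s * u)) = 1"
    proof -
      have "s * qcnj s + - (s * u) * qcnj (- (s * u)) = qr (qn s) + qr (qn (s * u))"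
        unfolding q_mult_cnj qn_neg by (rule refl)
      also have "\<dots> = qr (\<sigma>^2 * (1 + qn u))"
        unfolding s_def qr_add qn_qr_mult by (simp add: qn_def qr_def algebra_simps)
      finally show ?thesis using sig qr_1 by simp
    qed
    have c4: "s * qcnj u * qcnj (s * qcnj u) + s * qcnj s = 1"
    proof -
      have "s * qcnj u * qcnj (s * qcnj u) + s * qcnj s = qr (qn (s * qcnj u)) + qr (qn s)"
        unfolding q_mult_cnj by (rule refl)
      also have "\<dots> = qr (\<sigma>^2 * (1 + qn u))"
        unfolding s_def qr_add qn_qr_mult qn_cnj by (simp add: qn_def qr_def algebra_simps)
      finally show ?thesis using sig qr_1 by simp
    qed
    have c2: "s * qcnj (s * qcnj u) + - (s * u) * qcnj s = 0"
      unfolding qcnj_mult s_def qcnj_qr qcnj_cnj by (simp add: mult.assoc)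
    have c3: "s * qcnj u * qcnj s + s * qcnj (- (s * u)) = 0"
      unfolding qcnj_mult qcnj_minus s_def qcnj_qr by (simp add: mult.assoc)
    have B: "B \<in> Kpq n p q" unfolding B_def
      by (rule KM_Sp[OF pq]) (use c1 c2 c3 c4 in simp_all)
    note E = KM_entries[OF pq, where d="\<lambda>_. 1" and aa=s and ab="- (s * u)" and ba="s * qcnj u" and bb=s, folded B_def]
    have "flag_act n B (Mf 1 0) = Mf (s * 1) (s * u)"
      unfolding act_Kpq_10[OF B] E s_def qcnj_mult qcnj_qr qcnj_cnj qr_comm[of \<sigma> u] by simp
    also have "\<dots> = Mf 1 u" by (rule Mf_scale[OF s0])
    finally show ?thesis unfolding Swpq_eq F1 using B by (metis image_eqI)
  qed
qed

end

context flagctx begin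

lemma Mf_ne10: "b \<noteq> 0 \<Longrightarrow> Mf a b \<noteq> Mf 1 0"
  using Mf_eq[of 1 0 a b] by auto

lemma Mf_ne01: "a \<noteq> 0 \<Longrightarrow> Mf a b \<noteq> Mf 0 1"
  using Mf_eq[of 0 1 a b] by auto

lemma Mf_0b: assumes "b \<noteq> 0" shows "Mf 0 b = Mf 0 1"
proof -
  have "Mf (b * 0) (b * 1) = Mf 0 1" by (rule Mf_scale[OF assms])
  then show ?thesis by (simp only: mult_zero_right mult_1_right)
qed

lemma Mf_a0: assumes "a \<noteq> 0" shows "Mf a 0 = Mf 1 0"
proof -
  have "Mf (a * 1) (a * 0) = Mf 1 0" by (rule Mf_scale[OF assms])
  then show ?thesis by (simp only: mult_zero_right mult_1_right)
qed

lemma C_char: "F \<in> Swpq n w p q - {Mf 1 0, Mf 0 1} \<longleftrightarrow> (\<exists>a b. a \<noteq> 0 \<and> b \<noteq> 0 \<and> F = Mf a b)"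
proof
  assume F: "F \<in> Swpq n w p q - {Mf 1 0, Mf 0 1}"
  then have "F \<in> Swpq n w p q" by blast
  then obtain a b where ab: "a \<noteq> 0 \<or> b \<noteq> 0" and Fe: "F = Mf a b" unfolding S_char by blast
  have "a \<noteq> 0"
  proof
    assume a: "a = 0" then have "b \<noteq> 0" using ab by blast
    then have "F = Mf 0 1" unfolding Fe a by (rule Mf_0b)
    then show False using F by blast
  qed
  moreover have "b \<noteq> 0"
  proof
    assume b: "b = 0" then have "a \<noteq> 0" using ab by blast
    then have "F = Mf 1 0" unfolding Fe b by (rule Mf_a0)
    then show False using F by blast
  qed
  ultimately show "\<exists>a b. a \<noteq> 0 \<and> b \<noteq> 0 \<and> F = Mf a b" using Fe by blast
next
  assume "\<exists>a b. a \<noteq> 0 \<and> b \<noteq> 0 \<and> F = Mf a b"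
  then obtain a b where ab: "a \<noteq> 0" "b \<noteq> 0" and Fe: "F = Mf a b" by blast
  have "F \<in> Swpq n w p q" unfolding S_char using ab Fe by blast
  moreover have "F \<noteq> Mf 1 0" unfolding Fe by (rule Mf_ne10[OF ab(2)])
  moreover have "F \<noteq> Mf 0 1" unfolding Fe by (rule Mf_ne01[OF ab(1)])
  ultimately show "F \<in> Swpq n w p q - {Mf 1 0, Mf 0 1}" by blast
qed

lemma Kgrp_props:
  assumes "B \<in> Kgrp n" shows "B \<in> Kpq n p q" "B p q = 0" "B q p = 0"
  using assms pq(3) unfolding Kgrp_def Kpq_def by auto

lemma Kgrp_fix10: assumes B: "B \<in> Kgrp n" shows "flag_act n B (Mf 1 0) = Mf 1 0"
proof -
  note K = Kgrp_props[OF B]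
  note cs = Kpq_conds[OF K(1) pq]
  have "B p p \<noteq> 0" using cs(2) K(2) by auto
  then have "qcnj (B p p) \<noteq> 0" by simp
  then show ?thesis unfolding act_Kpq_10[OF K(1)] K(3) qcnj_0 by (rule Mf_a0)
qed

lemma Kgrp_fix01: assumes B: "B \<in> Kgrp n" shows "flag_act n B (Mf 0 1) = Mf 0 1"
proof -
  note K = Kgrp_props[OF B]
  note cs = Kpq_conds[OF K(1) pq]
  have "B q q \<noteq> 0" using cs(5) K(3) by auto
  then have "qcnj (B q q) \<noteq> 0" by simp
  moreover have "flag_act n B (Mf 0 1) = Mf 0 (qcnj (B q q))"
    unfolding act_Kpq[OF K(1)] K(2) by simp
  ultimately show ?thesis using Mf_0b by metis
qed

definition Dm :: qmat where "Dm = KM n p q (\<lambda>_. 1) 1 0 0 (- 1)"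

lemma Dm_K: "Dm \<in> Kgrp n"
proof -
  have qm1: "qcnj (- 1) = - 1" by (simp add: qcnj_minus)
  have K: "Dm \<in> Kpq n p q" unfolding Dm_def by (rule KM_Sp[OF pq]) (simp_all add: qm1)
  note E = KM_entries[OF pq, where d="\<lambda>_. 1" and aa=1 and ab=0 and ba=0 and bb="- 1", folded Dm_def]
  have "\<forall>i j. i \<noteq> j \<longrightarrow> Dm i j = 0"
  proof (intro allI impI)
    fix i j :: nat assume "i \<noteq> j"
    show "Dm i j = 0"
    proof (cases "i = p \<and> j = q")
      case True then show ?thesis using E(2) by simp
    next
      case False
      show ?thesis
      proof (cases "i = q \<and> j = p")
        case True then show ?thesis using E(3) by simp
      next
        case False2: False
        then show ?thesis using E(6)[OF \<open>i \<noteq> j\<close>] False by blast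
      qed
    qed
  qed
  then show ?thesis using K unfolding Kgrp_def Kpq_def by blast
qed

lemma Dm_act: "flag_act n Dm (Mf a b) = Mf a (- b)"
proof -
  have qm1: "qcnj (- 1) = - 1" by (simp add: qcnj_minus)
  note E = KM_entries[OF pq, where d="\<lambda>_. 1" and aa=1 and ab=0 and ba=0 and bb="- 1", folded Dm_def]
  show ?thesis unfolding act_Kpq[OF Kgrp_props(1)[OF Dm_K]] E qm1 by simp
qed

lemma main:
  "{F \<in> Swpq n w p q. \<forall>B\<in>Kgrp n. flag_act n B F = F} = {Fw n w, Fw n (transpose p q \<circ> w)}
     \<and> (\<forall>g\<in>Ggrp n. \<forall>F\<in>Swpq n w p q - {Fw n w, Fw n (transpose p q \<circ> w)}. flag_act n g F \<in> Swpq n w p q - {Fw n w, Fw n (transpose p q \<circ> w)})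
     \<and> (\<forall>F1\<in>Swpq n w p q - {Fw n w, Fw n (transpose p q \<circ> w)}. \<forall>F2\<in>Swpq n w p q - {Fw n w, Fw n (transpose p q \<circ> w)}. \<exists>g\<in>Ggrp n. flag_act n g F1 = F2)
     \<and> (\<exists>F\<in>Swpq n w p q - {Fw n w, Fw n (transpose p q \<circ> w)}. {g \<in> Ggrp n. flag_act n g F = F} = Gpq n p q)"
  unfolding Fw_M Fw_sw_M
proof (intro conjI)
  show "{F \<in> Swpq n w p q. \<forall>B\<in>Kgrp n. flag_act n B F = F} = {Mf 1 0, Mf 0 1}"
  proof (rule set_eqI, rule iffI)
    fix F assume "F \<in> {F \<in> Swpq n w p q. \<forall>B\<in>Kgrp n. flag_act n B F = F}"
    then have FS: "F \<in> Swpq n w p q" and fx0: "\<forall>B\<in>Kgrp n. flag_act n B F = F" by auto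
    obtain a b where ab: "a \<noteq> 0 \<or> b \<noteq> 0" and Fe: "F = Mf a b" using FS S_char by blast
    show "F \<in> {Mf 1 0, Mf 0 1}"
    proof (cases "a = 0")
      case True then have "b \<noteq> 0" using ab by blast
      then have "F = Mf 0 1" unfolding Fe True by (rule Mf_0b)
      then show ?thesis by blast
    next
      case a0: False
      show ?thesis
      proof (cases "b = 0")
        case True have "F = Mf 1 0" unfolding Fe True using a0 by (rule Mf_a0)
        then show ?thesis by blast
      next
        case False
        have "Mf a b = Mf a (- b)" using fx0 Dm_K Dm_act Fe by metis
        then obtain c where c: "a = c * a" "- b = c * b" using Mf_eq by blast
        have "(c - 1) * a = 0" using c(1) by (simp add: algebra_simps)
        then have "c = 1" using a0 qmult_eq0 by auto
        then have "b = - b" using c(2) by simp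
        then have "b = 0" by (rule q_self_neg)
        then show ?thesis using False by simp
      qed
    qed
  next
    fix F assume F: "F \<in> {Mf 1 0, Mf 0 1}"
    have "Mf 1 0 \<in> Swpq n w p q" unfolding S_char by (rule exI[of _ 1], rule exI[of _ 0]) simp
    moreover have "Mf 0 1 \<in> Swpq n w p q" unfolding S_char by (rule exI[of _ 0], rule exI[of _ 1]) simp
    moreover have "\<forall>B\<in>Kgrp n. flag_act n B (Mf 1 0) = Mf 1 0" "\<forall>B\<in>Kgrp n. flag_act n B (Mf 0 1) = Mf 0 1"
      using Kgrp_fix10 Kgrp_fix01 by auto
    ultimately show "F \<in> {F \<in> Swpq n w p q. \<forall>B\<in>Kgrp n. flag_act n B F = F}" using F by auto
  qed
next
  show "\<forall>g\<in>Ggrp n. \<forall>F\<in>Swpq n w p q - {Mf 1 0, Mf 0 1}. flag_act n g F \<in> Swpq n w p q - {Mf 1 0, Mf 0 1}"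
  proof (intro ballI)
    fix g F assume g: "g \<in> Ggrp n" and F: "F \<in> Swpq n w p q - {Mf 1 0, Mf 0 1}"
    obtain \<gamma> where ge: "g = Diag n \<gamma>" and gn: "\<forall>\<nu>\<in>{1..n}. \<gamma> \<nu> \<noteq> 0" using g unfolding Ggrp_def by blast
    obtain a b where ab: "a \<noteq> 0" "b \<noteq> 0" and Fe: "F = Mf a b" using F C_char by blast
    have "a * qcnj (\<gamma> p) \<noteq> 0" "b * qcnj (\<gamma> q) \<noteq> 0" using ab gn pq by (auto simp: qmult_eq0)
    then show "flag_act n g F \<in> Swpq n w p q - {Mf 1 0, Mf 0 1}"
      unfolding ge Fe act_Diag[OF gn] using C_char by blast
  qed
next
  show "\<forall>F1\<in>Swpq n w p q - {Mf 1 0, Mf 0 1}. \<forall>F2\<in>Swpq n w p q - {Mf 1 0, Mf 0 1}. \<exists>g\<in>Ggrp n. flag_act n g F1 = F2"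
  proof (intro ballI)
    fix F1 F2 assume F1: "F1 \<in> Swpq n w p q - {Mf 1 0, Mf 0 1}" and F2: "F2 \<in> Swpq n w p q - {Mf 1 0, Mf 0 1}"
    obtain a1 b1 where ab1: "a1 \<noteq> 0" "b1 \<noteq> 0" and F1e: "F1 = Mf a1 b1" using F1 C_char by blast
    obtain a2 b2 where ab2: "a2 \<noteq> 0" "b2 \<noteq> 0" and F2e: "F2 = Mf a2 b2" using F2 C_char by blast
    have qi: "qinv a1 \<noteq> 0" "qinv b1 \<noteq> 0" using qinv_l[OF ab1(1)] qinv_l[OF ab1(2)] by auto
    define \<gamma> where "\<gamma> = (\<lambda>k. if k = p then qcnj (qinv a1 * a2) else if k = q then qcnj (qinv b1 * b2) else 1)"
    have gn: "\<forall>\<nu>\<in>{1..n}. \<gamma> \<nu> \<noteq> 0" unfolding \<gamma>_def using qi ab2 by (auto simp: qmult_eq0)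
    have gp: "\<gamma> p = qcnj (qinv a1 * a2)" "\<gamma> q = qcnj (qinv b1 * b2)" unfolding \<gamma>_def using pq(3) by auto
    have "a1 * qcnj (\<gamma> p) = a2" "b1 * qcnj (\<gamma> q) = b2"
      unfolding gp qcnj_cnj using qinv_r[OF ab1(1)] qinv_r[OF ab1(2)] by (simp_all add: mult.assoc[symmetric])
    then have "flag_act n (Diag n \<gamma>) F1 = F2" unfolding F1e F2e act_Diag[OF gn] by simp
    moreover have "Diag n \<gamma> \<in> Ggrp n" unfolding Ggrp_def using gn by blast
    ultimately show "\<exists>g\<in>Ggrp n. flag_act n g F1 = F2" by blast
  qed
next
  have M11: "Mf 1 1 \<in> Swpq n w p q - {Mf 1 0, Mf 0 1}" unfolding C_char by (rule exI[of _ 1], rule exI[of _ 1]) simp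
  have "{g \<in> Ggrp n. flag_act n g (Mf 1 1) = Mf 1 1} = Gpq n p q"
  proof (rule set_eqI, rule iffI)
    fix g assume "g \<in> {g \<in> Ggrp n. flag_act n g (Mf 1 1) = Mf 1 1}"
    then have g: "g \<in> Ggrp n" and fx: "flag_act n g (Mf 1 1) = Mf 1 1" by auto
    obtain \<gamma> where ge: "g = Diag n \<gamma>" and gn: "\<forall>\<nu>\<in>{1..n}. \<gamma> \<nu> \<noteq> 0" using g unfolding Ggrp_def by blast
    have "Mf (qcnj (\<gamma> p)) (qcnj (\<gamma> q)) = Mf 1 1" using fx unfolding ge act_Diag[OF gn] by simp
    then obtain c where c: "1 = c * qcnj (\<gamma> p)" "1 = c * qcnj (\<gamma> q)" using Mf_eq by blast
    have c0: "c \<noteq> 0" using c(1) by auto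
    have "qinv c * (c * qcnj (\<gamma> p)) = qinv c * (c * qcnj (\<gamma> q))" using c by simp
    then have "qcnj (\<gamma> p) = qcnj (\<gamma> q)" using qinv_l[OF c0] by (simp add: mult.assoc[symmetric])
    then have "\<gamma> p = \<gamma> q" by (metis qcnj_cnj)
    then show "g \<in> Gpq n p q" unfolding Gpq_def ge using gn by blast
  next
    fix g assume "g \<in> Gpq n p q"
    then obtain \<gamma> where ge: "g = Diag n \<gamma>" and gn: "\<forall>\<nu>\<in>{1..n}. \<gamma> \<nu> \<noteq> 0" and gpq: "\<gamma> p = \<gamma> q"
      unfolding Gpq_def by blast
    have "qcnj (\<gamma> p) \<noteq> 0" using gn pq by simp
    then have "flag_act n g (Mf 1 1) = Mf 1 1"
      unfolding ge act_Diag[OF gn] gpq[symmetric] using Mf_scale[of "qcnj (\<gamma> p)" 1 1] by simp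
    moreover have "g \<in> Ggrp n" unfolding Ggrp_def ge using gn by blast
    ultimately show "g \<in> {g \<in> Ggrp n. flag_act n g (Mf 1 1) = Mf 1 1}" by blast
  qed
  then show "\<exists>F\<in>Swpq n w p q - {Mf 1 0, Mf 0 1}. {g \<in> Ggrp n. flag_act n g F = F} = Gpq n p q"
    using M11 by blast
qed

end

lemma Kpq_sym: "Kpq n q p = Kpq n p q"
proof -
  have e: "\<And>i j. ((i, j) \<noteq> (q, p) \<and> (i, j) \<noteq> (p, q)) = ((i, j) \<noteq> (p, q) \<and> (i, j) \<noteq> (q, p))"
    by blast
  show ?thesis unfolding Kpq_def by (simp only: e)
qed

lemma Gpq_sym: "Gpq n q p = Gpq n p q"
proof -
  have e: "\<And>\<gamma>::nat \<Rightarrow> quat. (\<gamma> q = \<gamma> p) = (\<gamma> p = \<gamma> q)" by (rule eq_commute)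
  show ?thesis unfolding Gpq_def by (simp only: e)
qed

lemma Swpq_sym: "Swpq n w q p = Swpq n w p q"
  unfolding Swpq_def Kpq_sym[of n q p] by (rule refl)

theorem lemma3p3:
  fixes n p q :: nat and w :: "nat \<Rightarrow> nat"
  assumes "w permutes {1..n}" and "1 \<le> p" and "p < q" and "q \<le> n"
  defines "S \<equiv> Swpq n w p q"
  defines "C \<equiv> S - {Fw n w, Fw n (transpose p q \<circ> w)}"
  shows "{F \<in> S. \<forall>B\<in>Kgrp n. flag_act n B F = F} = {Fw n w, Fw n (transpose p q \<circ> w)}
     \<and> (\<forall>g\<in>Ggrp n. \<forall>F\<in>C. flag_act n g F \<in> C)
     \<and> (\<forall>F1\<in>C. \<forall>F2\<in>C. \<exists>g\<in>Ggrp n. flag_act n g F1 = F2)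
     \<and> (\<exists>F\<in>C. {g \<in> Ggrp n. flag_act n g F = F} = Gpq n p q)"
proof -
  have img: "w ` {1..n} = {1..n}" using assms(1) by (rule permutes_image)
  have "p \<in> w ` {1..n}" "q \<in> w ` {1..n}" unfolding img using assms(2-4) by auto
  then obtain i j where i: "i \<in> {1..n}" "w i = p" and j: "j \<in> {1..n}" "w j = q"
    by (metis imageE)
  have "i \<noteq> j" using i j assms(3) by auto
  show ?thesis
  proof (cases "i < j")
    case True
    interpret flagctx n w i j p q by (rule flagctx.intro[OF assms(1) i(1) j(1) True i(2) j(2)])
    show ?thesis unfolding C_def S_def by (rule main)
  next
    case False
    then have ji: "j < i" using \<open>i \<noteq> j\<close> by simp
    interpret flagctx n w j i q p by (rule flagctx.intro[OF assms(1) j(1) i(1) ji j(2) i(2)])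
    have tr: "transpose q p = transpose p q" by (rule transpose_commute)
    show ?thesis using main unfolding C_def S_def Swpq_sym[of n w q p] Gpq_sym[of n q p] tr .
  qed
qed

end
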